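(* Let $\beta>0$, $\sigma>0$, and let $f$ be a sample path of the centered Gaussian process on $[0,1]$ with covariance $\sigma^2\exp(-\beta|x-y|)$ (continuous version). Then for every integer $n\ge 0$, $$\mathbb E\Big[\max_{0\le i\le 2^n} f(i/2^n)\Big]<8.68\sqrt{\beta}\,\sigma,$$ and consequently $\mathbb E[\max_{x\in[0,1]}f(x)]\le 8.68\sqrt\beta\,\sigma$. *)

theory Defs
  imports "HOL-Probability.Probability"
begin

definition centered_gaussian_process ::
  "'a measure \<Rightarrow> (real \<Rightarrow> 'a \<Rightarrow> real) \<Rightarrow> real set \<Rightarrow> (real \<Rightarrow> real \<Rightarrow> real) \<Rightarrow> bool" where
  "centered_gaussian_process M X T K \<longleftrightarrow>
     prob_space M \<and>
     (\<forall>t\<in>T. X t \<in> borel_measurable M) \<and>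
     (\<forall>(F::real set) (c::real \<Rightarrow> real). finite F \<and> F \<subseteq> T \<longrightarrow>
        (let v = (\<Sum>s\<in>F. \<Sum>t\<in>F. c s * c t * K s t) in
          if v = 0 then (AE \<omega> in M. (\<Sum>t\<in>F. c t * X t \<omega>) = 0)
          else distributed M lborel (\<lambda>\<omega>. \<Sum>t\<in>F. c t * X t \<omega>) (normal_density 0 (sqrt v))))"

end

theory Submission
  imports Defs
begin

lemma key_pt:
  fixes l A :: real and d :: "nat \<Rightarrow> real"
  assumes l: "l > 0" and A: "A > 0" and J: "finite J" and j: "j \<in> J"
  shows "d j \<le> (ln A - 1 + (1 + (\<Sum>i\<in>J. exp (l * d i))) / A) / l"
proof -
  have y: "exp (l * d j) / A > 0" using A by simp
  have "ln (exp (l * d j) / A) \<le> exp (l * d j) / A - 1" by (rule ln_le_minus_one[OF y])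
  hence "l * d j - ln A \<le> exp (l * d j) / A - 1" using A by (simp add: ln_div)
  moreover have "exp (l * d j) \<le> 1 + (\<Sum>i\<in>J. exp (l * d i))"
    using sum_nonneg_leq_bound[of J "\<lambda>i. exp (l * d i)"] J j
    by (smt (verit, best) exp_ge_zero member_le_sum)
  hence "exp (l * d j) / A \<le> (1 + (\<Sum>i\<in>J. exp (l * d i))) / A" using A by (simp add: divide_right_mono)
  ultimately have "l * d j \<le> ln A - 1 + (1 + (\<Sum>i\<in>J. exp (l * d i))) / A" by linarith
  thus ?thesis using l by (simp add: field_simps)
qed

lemma key_nonneg:
  fixes l A :: real and d :: "nat \<Rightarrow> real"
  assumes l: "l > 0" and A: "A > 0"
  shows "0 \<le> (ln A - 1 + (1 + (\<Sum>i\<in>J. exp (l * d i))) / A) / l"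
proof -
  have "ln (1 / A) \<le> 1 / A - 1" by (rule ln_le_minus_one) (use A in simp)
  hence "- ln A \<le> 1/A - 1" using A by (simp add: ln_div)
  moreover have "1 / A \<le> (1 + (\<Sum>i\<in>J. exp (l * d i))) / A"
    using A by (intro divide_right_mono) (auto intro: sum_nonneg)
  ultimately show ?thesis using l by simp
qed

lemma ln2_le: "ln 2 \<le> (71/100::real)"
proof -
  have "1 + 355/1000 + (355/1000)^2/2 \<le> exp (355/1000::real)"
    by (rule exp_lower_Taylor_quadratic) simp
  hence "(1 + 355/1000 + (355/1000)^2/2)^2 \<le> exp (355/1000::real) ^ 2"
    by (intro power_mono) auto
  also have "\<dots> = exp (71/100)" by (simp flip: exp_of_nat_mult)
  finally have h: "(1 + 355/1000 + (355/1000)^2/2)^2 \<le> exp (71/100::real)" .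
  have "(2::real) \<le> (1 + 355/1000 + (355/1000)^2/2)^2" by (simp add: power2_eq_square)
  with h have "2 \<le> exp (71/100::real)" by linarith
  thus ?thesis using ln_le_cancel_iff[of 2 "exp (71/100)"] by simp
qed

lemma ln15_le: "ln (3/2) \<le> (42/100::real)"
proof -
  have "1 + 42/100 + (42/100)^2/2 \<le> exp (42/100::real)"
    by (rule exp_lower_Taylor_quadratic) simp
  moreover have "(3/2::real) \<le> 1 + 42/100 + (42/100)^2/2" by (simp add: power2_eq_square)
  ultimately have "3/2 \<le> exp (42/100::real)" by linarith
  thus ?thesis using ln_le_cancel_iff[of "3/2" "exp (42/100)"] by simp
qed

lemma sqrt_pow_bound: "1 / sqrt (2 ^ k) \<le> (7072/10000::real) ^ k"
proof -
  have "1 / sqrt 2 \<le> (7072/10000::real)"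
  proof -
    have "(14142/10000) \<le> sqrt (2::real)" by (rule real_le_rsqrt) (simp add: power2_eq_square)
    thus ?thesis by (simp add: field_simps)
  qed
  hence "(1 / sqrt 2) ^ k \<le> (7072/10000::real) ^ k" by (intro power_mono) auto
  thus ?thesis by (simp add: real_sqrt_power power_divide)
qed

definition cc :: "nat \<Rightarrow> real" where
  "cc k = (if k \<le> 1 then (71/100 + (85/100)^2)/(85/100) else if k = 2 then (113/100 + (106/100)^2)/(106/100)
     else ((real k - 1)*(71/100) + 42/100 + (19/10)^2)/(19/10))"

lemma cc_nonneg: "0 \<le> cc k" by (simp add: cc_def)

lemma rearr: fixes q x y R :: real
  shows "q^(n+1) * (x + q * y) \<le> R \<Longrightarrow> x * q^(Suc n) + q^(Suc n + 1) * y \<le> R"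
  by (simp add: algebra_simps)

lemma num_aux: "2 \<le> n \<Longrightarrow> (\<Sum>k\<le>n. cc k * (7072/10000)^k) + (7072/10000)^(n+1) * (128/100 * real (n+1) + 91/10) \<le> (86/10::real)"
proof (induction n rule: dec_induct)
  case base
  show ?case by (simp add: cc_def numeral_2_eq_2)
next
  case (step n)
  let ?q = "7072/10000::real"
  have c: "cc (Suc n) = (real n * (71/100) + 42/100 + (19/10)^2)/(19/10)" using step(1) by (simp add: cc_def)
  have "cc (Suc n) + ?q * (128/100 * real (Suc n + 1) + 91/10) \<le> 128/100 * real (n+1) + 91/10"
    unfolding c by (simp add: field_simps)
  hence "?q^(n+1) * (cc (Suc n) + ?q * (128/100 * real (Suc n + 1) + 91/10)) \<le> ?q^(n+1) * (128/100 * real (n+1) + 91/10)"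
    by (intro mult_left_mono) auto
  hence "cc (Suc n) * ?q^(Suc n) + ?q^(Suc n + 1) * (128/100 * real (Suc n + 1) + 91/10) \<le> ?q^(n+1) * (128/100 * real (n+1) + 91/10)"
    by (rule rearr)
  with step(3) show ?case by simp
qed

lemma num_bound: "(\<Sum>k\<le>n. cc k * (7072/10000)^k) \<le> (86/10::real)"
proof -
  have "(\<Sum>k\<le>n. cc k * (7072/10000::real)^k) \<le> (\<Sum>k\<le>max n 2. cc k * (7072/10000)^k)"
    using cc_nonneg by (intro sum_mono2) auto
  also have "\<dots> \<le> 86/10"
  proof -
    have "0 \<le> (7072/10000::real)^(max n 2+1) * (128/100 * real (max n 2+1) + 91/10)" by simp
    moreover have "(\<Sum>k\<le>max n 2. cc k * (7072/10000)^k) + (7072/10000)^(max n 2+1) * (128/100 * real (max n 2+1) + 91/10) \<le> (86/10::real)"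
      by (rule num_aux) simp
    ultimately show ?thesis by linarith
  qed
  finally show ?thesis .
qed

lemma mgf_pt: fixes s l :: real assumes "s > 0"
  shows "normal_density 0 s x * exp (l * x) = exp (l^2 * s^2 / 2) * normal_density (l * s^2) s x"
proof -
  have "-(x - 0)\<^sup>2/ (2 * s\<^sup>2) + l * x = l^2 * s^2 / 2 + (-(x - l * s^2)\<^sup>2/ (2 * s\<^sup>2))"
    using assms by (simp add: field_simps power2_eq_square)
  then have "exp (-(x - 0)\<^sup>2/ (2 * s\<^sup>2)) * exp (l * x) = exp (l^2 * s^2 / 2) * exp (-(x - l * s^2)\<^sup>2/ (2 * s\<^sup>2))"
    by (metis exp_add)
  then show ?thesis unfolding normal_density_def by (simp add: mult_ac)
qed

lemma mgf:
  assumes "prob_space M" and D: "distributed M lborel Y (\<lambda>x. ennreal (normal_density 0 s x))" and s: "s > 0"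
  shows "integrable M (\<lambda>\<omega>. exp (l * Y \<omega>))" "(\<integral>\<omega>. exp (l * Y \<omega>) \<partial>M) = exp (l^2 * s^2 / 2)"
proof -
  have eq: "(\<lambda>x. normal_density 0 s x * exp (l * x)) = (\<lambda>x. exp (l^2 * s^2 / 2) * normal_density (l * s^2) s x)"
    using mgf_pt[OF s] by auto
  have "integrable lborel (\<lambda>x. normal_density 0 s x * exp (l * x))"
    unfolding eq using s by auto
  then show "integrable M (\<lambda>\<omega>. exp (l * Y \<omega>))"
    using distributed_integrable[OF D, of "\<lambda>x. exp (l * x)"] by simp
  have "(\<integral>\<omega>. exp (l * Y \<omega>) \<partial>M) = (\<integral>x. normal_density 0 s x * exp (l * x) \<partial>lborel)"
    using distributed_integral[OF D, of "\<lambda>x. exp (l * x)"] by simp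
  also have "\<dots> = exp (l^2 * s^2 / 2)" unfolding eq using s by simp
  finally show "(\<integral>\<omega>. exp (l * Y \<omega>) \<partial>M) = exp (l^2 * s^2 / 2)" .
qed

lemma gp_lin:
  assumes G: "centered_gaussian_process M X T K" and F: "finite F" "F \<subseteq> T"
  shows "(let v = (\<Sum>s\<in>F. \<Sum>t\<in>F. c s * c t * K s t) in
          if v = 0 then (AE \<omega> in M. (\<Sum>t\<in>F. c t * X t \<omega>) = 0)
          else distributed M lborel (\<lambda>\<omega>. \<Sum>t\<in>F. c t * X t \<omega>) (normal_density 0 (sqrt v)))"
proof -
  have A: "\<forall>(F::real set) (c::real \<Rightarrow> real). finite F \<and> F \<subseteq> T \<longrightarrow>
        (let v = (\<Sum>s\<in>F. \<Sum>t\<in>F. c s * c t * K s t) in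
          if v = 0 then (AE \<omega> in M. (\<Sum>t\<in>F. c t * X t \<omega>) = 0)
          else distributed M lborel (\<lambda>\<omega>. \<Sum>t\<in>F. c t * X t \<omega>) (normal_density 0 (sqrt v)))"
    using G unfolding centered_gaussian_process_def by (rule conjunct2[THEN conjunct2])
  show ?thesis by (rule A[rule_format, OF conjI[OF F]])
qed

lemma gp_lin_pos:
  assumes G: "centered_gaussian_process M X T K" and F: "finite F" "F \<subseteq> T"
    and v: "(\<Sum>s\<in>F. \<Sum>t\<in>F. c s * c t * K s t) = v" "v > 0"
  shows "distributed M lborel (\<lambda>\<omega>. \<Sum>t\<in>F. c t * X t \<omega>) (\<lambda>x. ennreal (normal_density 0 (sqrt v) x))"
proof -
  have ne: "v \<noteq> 0" using v by linarith
  show ?thesis using gp_lin[OF G F, of c] unfolding v(1) Let_def if_not_P[OF ne] .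
qed

lemma gp_single:
  assumes G: "centered_gaussian_process M X T K" and t: "t \<in> T" and pos: "K t t > 0"
  shows "distributed M lborel (X t) (\<lambda>x. ennreal (normal_density 0 (sqrt (K t t)) x))"
proof -
  have "distributed M lborel (\<lambda>\<omega>. \<Sum>u\<in>{t}. (\<lambda>_. 1::real) u * X u \<omega>) (\<lambda>x. ennreal (normal_density 0 (sqrt (K t t)) x))"
    by (rule gp_lin_pos[OF G]) (use t pos in auto)
  moreover have "(\<lambda>\<omega>. \<Sum>u\<in>{t}. (\<lambda>_. 1::real) u * X u \<omega>) = X t" by auto
  ultimately show ?thesis by simp
qed

lemma gp_diff:
  assumes G: "centered_gaussian_process M X T K" and a: "a \<in> T" and b: "b \<in> T" and ab: "a \<noteq> b"
    and pos: "K a a + K b b - K a b - K b a > 0"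
  shows "distributed M lborel (\<lambda>\<omega>. X a \<omega> - X b \<omega>) (\<lambda>x. ennreal (normal_density 0 (sqrt (K a a + K b b - K a b - K b a)) x))"
proof -
  define c where "c = (\<lambda>u. if u = a then 1 else -1::real)"
  have "distributed M lborel (\<lambda>\<omega>. \<Sum>u\<in>{a,b}. c u * X u \<omega>) (\<lambda>x. ennreal (normal_density 0 (sqrt (K a a + K b b - K a b - K b a)) x))"
    by (rule gp_lin_pos[OF G]) (use a b ab pos in \<open>auto simp: c_def algebra_simps\<close>)
  moreover have "(\<lambda>\<omega>. \<Sum>u\<in>{a,b}. c u * X u \<omega>) = (\<lambda>\<omega>. X a \<omega> - X b \<omega>)" using ab by (auto simp: c_def)
  ultimately show ?thesis by simp
qed

lemma level_bound:
  fixes d :: "nat \<Rightarrow> 'a \<Rightarrow> real"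
  assumes P: "prob_space M" and J: "finite J" and l: "l > 0" and S: "S > 0"
    and D: "\<And>j. j\<in>J \<Longrightarrow> \<exists>v. 0 < v \<and> v \<le> S \<and> distributed M lborel (d j) (\<lambda>x. ennreal (normal_density 0 (sqrt v) x))"
    and A: "A = (real (card J) + 1) * exp (l^2 * S / 2)"
  shows "integrable M (\<lambda>\<omega>. (ln A - 1 + (1 + (\<Sum>i\<in>J. exp (l * d i \<omega>))) / A) / l)"
   and "(\<integral>\<omega>. (ln A - 1 + (1 + (\<Sum>i\<in>J. exp (l * d i \<omega>))) / A) / l \<partial>M) \<le> (ln (real (card J) + 1) + l^2 * S / 2) / l"
proof -
  interpret prob_space M by fact
  have Apos: "A > 0" using A by simp
  have ie: "integrable M (\<lambda>\<omega>. exp (l * d i \<omega>)) \<and> (\<integral>\<omega>. exp (l * d i \<omega>) \<partial>M) \<le> exp (l^2 * S / 2)" if i: "i \<in> J" for i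
  proof -
    obtain v where v: "0 < v" "v \<le> S" "distributed M lborel (d i) (\<lambda>x. ennreal (normal_density 0 (sqrt v) x))"
      using D[OF i] by blast
    have sv: "sqrt v > 0" using v by simp
    have "(\<integral>\<omega>. exp (l * d i \<omega>) \<partial>M) = exp (l^2 * (sqrt v)^2 / 2)"
      by (rule mgf(2)[OF P v(3) sv])
    also have "\<dots> \<le> exp (l^2 * S / 2)" using v by (simp add: mult_left_mono)
    finally show ?thesis using mgf(1)[OF P v(3) sv] by simp
  qed
  have isum: "integrable M (\<lambda>\<omega>. \<Sum>i\<in>J. exp (l * d i \<omega>))"
  proof (rule Bochner_Integration.integrable_sum)
    fix i assume "i \<in> J" thus "integrable M (\<lambda>\<omega>. exp (l * d i \<omega>))" using ie by blast
  qed
  have eqf: "(\<lambda>\<omega>. (ln A - 1 + (1 + (\<Sum>i\<in>J. exp (l * d i \<omega>))) / A) / l)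
      = (\<lambda>\<omega>. (ln A - 1 + 1 / A) / l + (1 / (A * l)) * (\<Sum>i\<in>J. exp (l * d i \<omega>)))"
    using Apos l by (auto simp: field_simps)
  show "integrable M (\<lambda>\<omega>. (ln A - 1 + (1 + (\<Sum>i\<in>J. exp (l * d i \<omega>))) / A) / l)"
    unfolding eqf using isum by auto
  have "(\<integral>\<omega>. (ln A - 1 + (1 + (\<Sum>i\<in>J. exp (l * d i \<omega>))) / A) / l \<partial>M)
      = (ln A - 1 + 1 / A) / l + (1 / (A * l)) * (\<Sum>i\<in>J. (\<integral>\<omega>. exp (l * d i \<omega>) \<partial>M))"
    unfolding eqf using isum ie by (simp add: integral_sum prob_space)
  also have "\<dots> \<le> (ln A - 1 + 1 / A) / l + (1 / (A * l)) * (\<Sum>i\<in>J. exp (l^2 * S / 2))"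
    using ie Apos l by (intro add_left_mono mult_left_mono sum_mono) auto
  also have "\<dots> = (ln A - 1 + (1 + real (card J) * exp (l^2 * S / 2)) / A) / l"
    using Apos l by (simp add: field_simps)
  also have "\<dots> \<le> (ln A - 1 + 1) / l"
  proof -
    have "1 \<le> exp (l^2 * S / 2)" using S by simp
    hence "1 + real (card J) * exp (l^2 * S / 2) \<le> A" unfolding A by (simp add: algebra_simps)
    hence "(1 + real (card J) * exp (l^2 * S / 2)) / A \<le> 1" using Apos by simp
    thus ?thesis using l by (simp add: divide_right_mono)
  qed
  also have "\<dots> = (ln (real (card J) + 1) + l^2 * S / 2) / l"
    unfolding A by (simp add: ln_mult)
  finally show "(\<integral>\<omega>. (ln A - 1 + (1 + (\<Sum>i\<in>J. exp (l * d i \<omega>))) / A) / l \<partial>M) \<le> (ln (real (card J) + 1) + l^2 * S / 2) / l" .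
qed

definition mu :: "nat \<Rightarrow> real" where
  "mu k = (if k \<le> 1 then 85/100 else if k = 2 then 106/100 else 19/10)"
definition LL :: "nat \<Rightarrow> real" where
  "LL k = (if k \<le> 1 then 71/100 else (real k - 1) * (71/100) + 42/100)"
definition mm :: "nat \<Rightarrow> nat" where
  "mm k = (if k = 0 then 1 else 2^(k-1))"

lemma cc_eq: "cc k = (LL k + (mu k)^2) / mu k"
  by (simp add: cc_def LL_def mu_def)

lemma mu_pos: "mu k > 0" by (simp add: mu_def)

lemma ln_mm: "ln (real (mm k) + 1) \<le> LL k"
proof (cases "k \<le> 1")
  case True
  then have "mm k = 1" by (auto simp: mm_def)
  then show ?thesis using True ln2_le by (simp add: LL_def)
next
  case False
  then have mk: "mm k = 2^(k-1)" by (simp add: mm_def)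
  have "real (mm k) + 1 \<le> 3/2 * 2^(k-1)"
  proof -
    have "(2::real)^1 \<le> 2^(k-1)" by (rule power_increasing) (use False in auto)
    thus ?thesis unfolding mk by simp
  qed
  hence "ln (real (mm k) + 1) \<le> ln (3/2 * 2^(k-1))" by simp
  also have "\<dots> = ln (3/2) + ln (2^(k-1))" by (rule trans[OF ln_mult[of "3/2::real" "2^(k-1)"]]) simp
  also have "\<dots> = ln (3/2) + real (k-1) * ln 2" by (simp add: ln_realpow)
  also have "\<dots> \<le> 42/100 + real (k-1) * (71/100)"
    using ln15_le ln2_le by (intro add_mono mult_left_mono) auto
  finally show ?thesis using False by (simp add: LL_def of_nat_diff)
qed

lemma max_integrable:
  fixes f :: "nat \<Rightarrow> 'a \<Rightarrow> real"
  assumes "finite I" "I \<noteq> {}" "\<And>i. i \<in> I \<Longrightarrow> integrable M (f i)"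
  shows "integrable M (\<lambda>\<omega>. Max ((\<lambda>i. f i \<omega>) ` I))"
  using assms
proof (induction I rule: finite_ne_induct)
  case (singleton x) then show ?case by simp
next
  case (insert x F)
  have "(\<lambda>\<omega>. Max ((\<lambda>i. f i \<omega>) ` insert x F)) = (\<lambda>\<omega>. max (f x \<omega>) (Max ((\<lambda>i. f i \<omega>) ` F)))"
    using insert by (auto simp: Max_insert)
  then show ?case using insert by (simp add: integrable_max)
qed

theorem mainTheorem4:
  fixes M :: "'a measure" and X :: "real \<Rightarrow> 'a \<Rightarrow> real" and \<beta> \<sigma> :: real
  assumes "\<beta> > 0" and "\<sigma> > 0"
    and "centered_gaussian_process M X {0..1} (\<lambda>x y. \<sigma>\<^sup>2 * exp (- \<beta> * \<bar>x - y\<bar>))"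
    and "\<forall>\<omega>\<in>space M. continuous_on {0..1} (\<lambda>x. X x \<omega>)"
  shows "(\<forall>n::nat.
            integrable M (\<lambda>\<omega>. Max ((\<lambda>i. X (real i / 2 ^ n) \<omega>) ` {0..2 ^ n})) \<and>
            (\<integral>\<omega>. Max ((\<lambda>i. X (real i / 2 ^ n) \<omega>) ` {0..2 ^ n}) \<partial>M) < 8.68 * sqrt \<beta> * \<sigma>)
       \<and> integrable M (\<lambda>\<omega>. Sup ((\<lambda>x. X x \<omega>) ` {0..1}))
       \<and> (\<integral>\<omega>. Sup ((\<lambda>x. X x \<omega>) ` {0..1}) \<partial>M) \<le> 8.68 * sqrt \<beta> * \<sigma>"
proof -
  note b = assms(1) and s = assms(2) and G = assms(3) and cont = assms(4)
  have P: "prob_space M" using G unfolding centered_gaussian_process_def by blast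
  interpret prob_space M by (rule P)
  have meas: "X t \<in> borel_measurable M" if "t \<in> {0..1}" for t
    using G that unfolding centered_gaussian_process_def by blast
  have Xint: "integrable M (X t) \<and> (\<integral>\<omega>. X t \<omega> \<partial>M) = 0" if t: "t \<in> {0..1}" for t
  proof -
    have D0: "distributed M lborel (X t) (\<lambda>x. ennreal (normal_density 0 (sqrt ((\<lambda>x y. \<sigma>\<^sup>2 * exp (- \<beta> * \<bar>x - y\<bar>)) t t)) x))"
      by (rule gp_single[OF G t]) (use s in simp)
    have D: "distributed M lborel (X t) (\<lambda>x. ennreal (normal_density 0 \<sigma> x))"
      using D0 s by simp
    have "integrable M (X t)"
      by (rule distributed_integrable_var[OF D]) (use integrable_normal_moment_nz_1[OF s] in auto)
    moreover have "expectation (X t) = 0" by (rule normal_distributed_expectation[OF s D])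
    ultimately show ?thesis by simp
  qed
  have Ddiff: "\<exists>v. 0 < v \<and> v \<le> 2 * \<sigma>\<^sup>2 * \<beta> * \<bar>a - b\<bar> \<and>
      distributed M lborel (\<lambda>\<omega>. X a \<omega> - X b \<omega>) (\<lambda>x. ennreal (normal_density 0 (sqrt v) x))"
    if a: "a \<in> {0..1}" and bb: "b \<in> {0..1}" and ab: "a \<noteq> b" for a b
  proof -
    let ?K = "\<lambda>x y. \<sigma>\<^sup>2 * exp (- \<beta> * \<bar>x - y\<bar>)"
    have v: "?K a a + ?K b b - ?K a b - ?K b a = 2 * \<sigma>\<^sup>2 * (1 - exp (- \<beta> * \<bar>a - b\<bar>))"
      by (simp add: abs_minus_commute algebra_simps)
    have pos1: "exp (- \<beta> * \<bar>a - b\<bar>) < 1" using b ab by simp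
    have "1 - \<beta> * \<bar>a - b\<bar> \<le> exp (- \<beta> * \<bar>a - b\<bar>)" using exp_ge_add_one_self[of "- \<beta> * \<bar>a - b\<bar>"] by simp
    hence le: "2 * \<sigma>\<^sup>2 * (1 - exp (- \<beta> * \<bar>a - b\<bar>)) \<le> 2 * \<sigma>\<^sup>2 * \<beta> * \<bar>a - b\<bar>"
      by (simp add: mult_left_mono)
    have pos: "?K a a + ?K b b - ?K a b - ?K b a > 0" unfolding v using pos1 s by simp
    show ?thesis
      using gp_diff[OF G a bb ab pos] pos le unfolding v by blast
  qed
  define lam where "lam k = mu k * sqrt (2^k) / (\<sigma> * sqrt \<beta>)" for k :: nat
  define SS where "SS k = 2 * \<sigma>\<^sup>2 * \<beta> / 2^k" for k :: nat
  define dd where "dd k j \<omega> = X (real (2*j+1) / 2^k) \<omega> - X (real (2*j) / 2^k) \<omega>" for k j \<omega>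
  define AA where "AA k = (real (card {..<mm k}) + 1) * exp (lam k ^ 2 * SS k / 2)" for k
  define H where "H k \<omega> = (ln (AA k) - 1 + (1 + (\<Sum>i\<in>{..<mm k}. exp (lam k * dd k i \<omega>))) / AA k) / lam k" for k \<omega>
  define Mx where "Mx n \<omega> = Max ((\<lambda>i. X (real i / 2 ^ n) \<omega>) ` {0..2 ^ n})" for n \<omega>
  have lampos: "lam k > 0" for k unfolding lam_def using mu_pos[of k] s b by simp
  have AApos: "AA k > 0" for k unfolding AA_def by simp
  have pts: "real (2*j+1) / 2^k \<in> {0..1} \<and> real (2*j) / 2^k \<in> {0..1}" if j: "j < mm k" for j k
  proof -
    have "2*j+1 \<le> 2^k"
    proof (cases k)
      case 0 then show ?thesis using j by (simp add: mm_def)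
    next
      case (Suc k') then show ?thesis using j by (simp add: mm_def)
    qed
    hence "real (2*j+1) \<le> 2^k" by (metis of_nat_le_iff of_nat_numeral of_nat_power)
    thus ?thesis by (auto simp: field_simps)
  qed
  have Hk: "integrable M (H k) \<and> (\<integral>\<omega>. H k \<omega> \<partial>M) \<le> (ln (real (card {..<mm k}) + 1) + lam k ^ 2 * SS k / 2) / lam k" for k
  proof -
    have Spos: "SS k > 0" unfolding SS_def using s b by simp
    have D: "\<exists>v. 0 < v \<and> v \<le> SS k \<and> distributed M lborel (dd k j) (\<lambda>x. ennreal (normal_density 0 (sqrt v) x))"
      if j: "j \<in> {..<mm k}" for j
    proof -
      have ne: "real (2*j+1) / 2^k \<noteq> real (2*j) / 2^k" by (simp add: divide_right_mono)
      have dist: "\<bar>real (2*j+1) / 2^k - real (2*j) / 2^k\<bar> = 1 / 2^k" by (simp add: field_simps)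
      obtain v where v: "0 < v" "v \<le> 2 * \<sigma>\<^sup>2 * \<beta> * \<bar>real (2*j+1) / 2^k - real (2*j) / 2^k\<bar>"
        "distributed M lborel (\<lambda>\<omega>. X (real (2*j+1) / 2^k) \<omega> - X (real (2*j) / 2^k) \<omega>) (\<lambda>x. ennreal (normal_density 0 (sqrt v) x))"
        using Ddiff[OF _ _ ne] pts[of j k] j by auto
      have "v \<le> SS k" using v(2) unfolding dist SS_def by simp
      moreover have "dd k j = (\<lambda>\<omega>. X (real (2*j+1) / 2^k) \<omega> - X (real (2*j) / 2^k) \<omega>)"
        by (rule ext) (simp add: dd_def)
      ultimately show ?thesis using v by auto
    qed
    show ?thesis
      using level_bound[OF P _ lampos[of k] Spos D AA_def[of k]] unfolding H_def[abs_def] by auto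
  qed
  have Hk2: "(\<integral>\<omega>. H k \<omega> \<partial>M) \<le> \<sigma> * sqrt \<beta> * (cc k * (7072/10000)^k)" for k
  proof -
    have e1: "lam k ^ 2 * SS k / 2 = mu k ^ 2"
      unfolding lam_def SS_def using s b by (simp add: power_divide power_mult_distrib)
    have "(ln (real (card {..<mm k}) + 1) + lam k ^ 2 * SS k / 2) / lam k
        = \<sigma> * sqrt \<beta> * ((ln (real (mm k) + 1) + mu k ^ 2) / mu k) * (1 / sqrt (2^k))"
      unfolding e1 using s b mu_pos[of k] by (simp add: lam_def field_simps)
    also have "\<dots> \<le> \<sigma> * sqrt \<beta> * cc k * (7072/10000)^k"
    proof -
      have "(ln (real (mm k) + 1) + mu k ^ 2) / mu k \<le> cc k"
        unfolding cc_eq using ln_mm[of k] mu_pos[of k] by (simp add: divide_right_mono)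
      moreover have "0 \<le> (ln (real (mm k) + 1) + mu k ^ 2) / mu k" using mu_pos[of k] by simp
      ultimately show ?thesis using sqrt_pow_bound[of k] s b
        by (intro mult_mono mult_left_mono) (auto simp: cc_nonneg)
    qed
    finally show ?thesis using Hk[of k] by (simp add: mult_ac)
  qed
  have Hnn: "0 \<le> H k \<omega>" for k \<omega>
    unfolding H_def by (rule key_nonneg[OF lampos AApos])
  have Hge: "dd k j \<omega> \<le> H k \<omega>" if "j < mm k" for k j \<omega>
    unfolding H_def using key_pt[OF lampos AApos, of "{..<mm k}" j "\<lambda>i. dd k i \<omega>"] that by simp
  have Mx_int: "integrable M (Mx n)" for n
    unfolding Mx_def[abs_def]
    by (rule max_integrable[where f="\<lambda>i \<omega>. X (real i / 2 ^ n) \<omega>"]) (auto intro!: Xint[THEN conjunct1] simp: field_simps)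
  have fin: "finite ((\<lambda>i. X (real i / 2 ^ n) \<omega>) ` {0..2 ^ n})" "(\<lambda>i. X (real i / 2 ^ n) \<omega>) ` {0..2 ^ n} \<noteq> {}" for n \<omega>
    by auto
  have Mx_ge: "X (real i / 2^n) \<omega> \<le> Mx n \<omega>" if "i \<le> 2^n" for i n \<omega>
    unfolding Mx_def using that by (intro Max_ge fin) auto
  have step0: "Mx 0 \<omega> \<le> X 0 \<omega> + H 0 \<omega>" for \<omega>
  proof -
    have "Mx 0 \<omega> = Max ((\<lambda>i. X (real i) \<omega>) ` {0..1})" unfolding Mx_def by simp
    also have "\<dots> \<le> X 0 \<omega> + H 0 \<omega>"
    proof (subst Max_le_iff, simp, simp, intro ballI)
      fix y assume "y \<in> (\<lambda>i. X (real i) \<omega>) ` {0..1::nat}"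
      then obtain i where i: "i \<in> {0..1::nat}" "y = X (real i) \<omega>" by auto
      have "i = 0 \<or> i = 1" using i by auto
      moreover have "X 1 \<omega> \<le> X 0 \<omega> + H 0 \<omega>" using Hge[of 0 0 \<omega>] by (simp add: dd_def mm_def)
      ultimately show "y \<le> X 0 \<omega> + H 0 \<omega>" using i Hnn[of 0 \<omega>] by auto
    qed
    finally show ?thesis .
  qed
  have stepS: "Mx (Suc n) \<omega> \<le> Mx n \<omega> + H (Suc n) \<omega>" for n \<omega>
    unfolding Mx_def[of "Suc n"]
  proof (subst Max_le_iff, simp, simp, intro ballI)
    fix y assume "y \<in> (\<lambda>i. X (real i / 2 ^ Suc n) \<omega>) ` {0..2 ^ Suc n}"
    then obtain i where i: "i \<le> 2 ^ Suc n" "y = X (real i / 2 ^ Suc n) \<omega>" by auto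
    show "y \<le> Mx n \<omega> + H (Suc n) \<omega>"
    proof (cases "even i")
      case True
      then obtain j where j: "i = 2 * j" by blast
      have "real i / 2 ^ Suc n = real j / 2^n" unfolding j by simp
      moreover have "j \<le> 2^n" using i(1) j by simp
      ultimately show ?thesis using i(2) Mx_ge[of j n \<omega>] Hnn[of "Suc n" \<omega>] by simp
    next
      case False
      then obtain j where j: "i = 2 * j + 1" using oddE by blast
      have jl: "j < mm (Suc n)" using i(1) j by (simp add: mm_def)
      have "real (2*j) / 2 ^ Suc n = real j / 2^n" by simp
      hence "X (real (2*j) / 2 ^ Suc n) \<omega> \<le> Mx n \<omega>" using Mx_ge[of j n \<omega>] jl by (simp add: mm_def)
      moreover have "y = X (real (2*j) / 2 ^ Suc n) \<omega> + dd (Suc n) j \<omega>" using i(2) j by (simp add: dd_def)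
      ultimately show ?thesis using Hge[OF jl, of \<omega>] by linarith
    qed
  qed
  have bound: "(\<integral>\<omega>. Mx n \<omega> \<partial>M) \<le> (\<Sum>k\<le>n. \<integral>\<omega>. H k \<omega> \<partial>M)" for n
  proof (induction n)
    case 0
    have "(\<integral>\<omega>. Mx 0 \<omega> \<partial>M) \<le> (\<integral>\<omega>. X 0 \<omega> + H 0 \<omega> \<partial>M)"
      using Mx_int[of 0] Xint[of 0] Hk[of 0] step0 by (intro integral_mono) auto
    also have "\<dots> = (\<integral>\<omega>. H 0 \<omega> \<partial>M)" using Xint[of 0] Hk[of 0] by simp
    finally show ?case by simp
  next
    case (Suc n)
    have "(\<integral>\<omega>. Mx (Suc n) \<omega> \<partial>M) \<le> (\<integral>\<omega>. Mx n \<omega> + H (Suc n) \<omega> \<partial>M)"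
      using Mx_int Hk stepS by (intro integral_mono) auto
    also have "\<dots> = (\<integral>\<omega>. Mx n \<omega> \<partial>M) + (\<integral>\<omega>. H (Suc n) \<omega> \<partial>M)" using Mx_int Hk by simp
    finally show ?case using Suc by simp
  qed
  have bound2: "(\<integral>\<omega>. Mx n \<omega> \<partial>M) \<le> 86/10 * sqrt \<beta> * \<sigma>" for n
  proof -
    have "(\<Sum>k\<le>n. \<integral>\<omega>. H k \<omega> \<partial>M) \<le> (\<Sum>k\<le>n. \<sigma> * sqrt \<beta> * (cc k * (7072/10000)^k))"
      by (intro sum_mono Hk2)
    also have "\<dots> = \<sigma> * sqrt \<beta> * (\<Sum>k\<le>n. cc k * (7072/10000)^k)" by (simp add: sum_distrib_left)
    also have "\<dots> \<le> \<sigma> * sqrt \<beta> * (86/10)" using num_bound[of n] s b by (intro mult_left_mono) auto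
    finally show ?thesis using bound[of n] by (simp add: mult_ac)
  qed
  have part1: "\<forall>n::nat. integrable M (\<lambda>\<omega>. Max ((\<lambda>i. X (real i / 2 ^ n) \<omega>) ` {0..2 ^ n})) \<and>
            (\<integral>\<omega>. Max ((\<lambda>i. X (real i / 2 ^ n) \<omega>) ` {0..2 ^ n}) \<partial>M) < 8.68 * sqrt \<beta> * \<sigma>"
  proof
    fix n
    have lt: "86/10 * sqrt \<beta> * \<sigma> < 8.68 * sqrt \<beta> * \<sigma>" using s b by simp
    have e: "(\<integral>\<omega>. Max ((\<lambda>i. X (real i / 2 ^ n) \<omega>) ` {0..2 ^ n}) \<partial>M) \<le> 86/10 * sqrt \<beta> * \<sigma>"
      using bound2[of n] unfolding Mx_def .
    show "integrable M (\<lambda>\<omega>. Max ((\<lambda>i. X (real i / 2 ^ n) \<omega>) ` {0..2 ^ n})) \<and>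
            (\<integral>\<omega>. Max ((\<lambda>i. X (real i / 2 ^ n) \<omega>) ` {0..2 ^ n}) \<partial>M) < 8.68 * sqrt \<beta> * \<sigma>"
      using Mx_int[of n] e lt unfolding Mx_def[abs_def] by linarith
  qed
  define Sp where "Sp \<omega> = Sup ((\<lambda>x. X x \<omega>) ` {0..1})" for \<omega>
  have Mx_mono: "Mx n \<omega> \<le> Mx (Suc n) \<omega>" for n \<omega>
    unfolding Mx_def[of n]
  proof (subst Max_le_iff, simp, simp, intro ballI)
    fix y assume "y \<in> (\<lambda>i. X (real i / 2 ^ n) \<omega>) ` {0..2 ^ n}"
    then obtain i where i: "i \<le> 2 ^ n" "y = X (real i / 2 ^ n) \<omega>" by auto
    have "real (2*i) / 2 ^ Suc n = real i / 2^n" by simp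
    moreover have "2*i \<le> 2 ^ Suc n" using i by simp
    ultimately show "y \<le> Mx (Suc n) \<omega>" using i(2) Mx_ge[of "2*i" "Suc n" \<omega>] by simp
  qed
  have conv: "(\<lambda>n. Mx n \<omega>) \<longlonglongrightarrow> Sp \<omega>" if \<omega>: "\<omega> \<in> space M" for \<omega>
  proof -
    have c: "continuous_on {0..1} (\<lambda>x. X x \<omega>)" using cont \<omega> by blast
    obtain x0 where x0: "x0 \<in> {0..1}" "\<And>y. y \<in> {0..1} \<Longrightarrow> X y \<omega> \<le> X x0 \<omega>"
      using continuous_attains_sup[OF compact_Icc _ c] by auto
    have Speq: "Sp \<omega> = X x0 \<omega>" unfolding Sp_def by (rule cSup_eq_maximum) (use x0 in auto)
    have up: "Mx n \<omega> \<le> Sp \<omega>" for n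
      unfolding Mx_def Speq
    proof (subst Max_le_iff, simp, simp, intro ballI)
      fix y assume "y \<in> (\<lambda>i. X (real i / 2 ^ n) \<omega>) ` {0..2 ^ n}"
      then obtain i where i: "i \<le> 2 ^ n" "y = X (real i / 2 ^ n) \<omega>" by auto
      have "real i \<le> 2^n" using i(1) by (metis of_nat_le_iff of_nat_numeral of_nat_power)
      hence "real i / 2^n \<in> {0..1}" by (auto simp: field_simps)
      thus "y \<le> X x0 \<omega>" using x0(2) i(2) by simp
    qed
    define gi where "gi n = nat \<lfloor>x0 * 2^n\<rfloor>" for n :: nat
    have gr: "real (gi n) = of_int \<lfloor>x0 * 2^n\<rfloor>" for n
      unfolding gi_def using x0(1) by simp
    have gle: "real (gi n) \<le> x0 * 2^n" "x0 * 2^n - 1 \<le> real (gi n)" for n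
      unfolding gr using floor_correct[of "x0 * 2^n"] by auto
    have gi_le: "gi n \<le> 2^n" for n
    proof -
      have "x0 * 2^n \<le> 1 * 2^n" by (rule mult_right_mono) (use x0(1) in auto)
      hence "real (gi n) \<le> 2^n" using gle(1)[of n] by linarith
      thus ?thesis by (metis of_nat_le_iff of_nat_numeral of_nat_power)
    qed
    have gclose: "x0 - (1/2)^n \<le> real (gi n) / 2^n \<and> real (gi n) / 2^n \<le> x0" for n
    proof
      have "(x0*2^n - 1)/2^n \<le> real (gi n)/2^n" using gle(2)[of n] by (intro divide_right_mono) auto
      moreover have "(x0*2^n - 1)/2^n = x0 - (1/2)^n" by (simp add: diff_divide_distrib power_one_over)
      ultimately show "x0 - (1/2)^n \<le> real (gi n) / 2^n" by simp
      show "real (gi n) / 2^n \<le> x0" using gle(1)[of n] by (simp add: pos_divide_le_eq)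
    qed
    have "(\<lambda>n. x0 - (1/2::real)^n) \<longlonglongrightarrow> x0 - 0"
      by (intro tendsto_diff tendsto_const LIMSEQ_realpow_zero) auto
    hence l1: "(\<lambda>n. x0 - (1/2::real)^n) \<longlonglongrightarrow> x0" by simp
    have e1: "\<forall>\<^sub>F n in sequentially. x0 - (1/2::real)^n \<le> real (gi n) / 2^n"
      using gclose by (intro always_eventually) blast
    have e2: "\<forall>\<^sub>F n in sequentially. real (gi n) / 2^n \<le> x0"
      using gclose by (intro always_eventually) blast
    have glim: "(\<lambda>n. real (gi n) / 2^n) \<longlonglongrightarrow> x0"
      by (rule tendsto_sandwich[OF e1 e2 l1 tendsto_const])
    have gin: "real (gi n) / 2^n \<in> {0..1}" for n
    proof -
      have "real (gi n) \<le> 2^n" using gi_le[of n] by (metis of_nat_le_iff of_nat_numeral of_nat_power)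
      thus ?thesis by (auto simp: field_simps)
    qed
    have ev: "\<forall>\<^sub>F n in sequentially. real (gi n) / 2^n \<in> {0..1}"
      using gin by (intro always_eventually) blast
    have lim2: "(\<lambda>n. X (real (gi n) / 2^n) \<omega>) \<longlonglongrightarrow> X x0 \<omega>"
      by (rule continuous_on_tendsto_compose[OF c glim x0(1) ev])
    have ev1: "\<forall>\<^sub>F n in sequentially. X (real (gi n) / 2^n) \<omega> \<le> Mx n \<omega>"
      using Mx_ge gi_le by (intro always_eventually) blast
    have ev2: "\<forall>\<^sub>F n in sequentially. Mx n \<omega> \<le> X x0 \<omega>"
      using up Speq by (intro always_eventually) simp
    show ?thesis unfolding Speq
      by (rule tendsto_sandwich[OF ev1 ev2 lim2 tendsto_const])
  qed
  have Sp_meas: "Sp \<in> borel_measurable M"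
    by (rule borel_measurable_LIMSEQ_real[OF conv]) (use Mx_int in auto)
  have inc: "incseq (\<lambda>n. \<integral>\<omega>. Mx n \<omega> \<partial>M)"
    by (rule incseq_SucI, rule integral_mono) (use Mx_int Mx_mono in auto)
  have bdd: "bdd_above (range (\<lambda>n. \<integral>\<omega>. Mx n \<omega> \<partial>M))"
    using bound2 by (intro bdd_aboveI2[where M="86/10 * sqrt \<beta> * \<sigma>"]) auto
  have ilim: "(\<lambda>n. \<integral>\<omega>. Mx n \<omega> \<partial>M) \<longlonglongrightarrow> (SUP n. \<integral>\<omega>. Mx n \<omega> \<partial>M)"
    by (rule LIMSEQ_incseq_SUP[OF bdd inc])
  have ae_mono: "AE \<omega> in M. mono (\<lambda>n. Mx n \<omega>)"
    by (rule AE_I2) (simp add: mono_iff_le_Suc Mx_mono)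
  have ae_lim: "AE \<omega> in M. (\<lambda>i. Mx i \<omega>) \<longlonglongrightarrow> Sp \<omega>"
    by (rule AE_I2) (rule conv)
  have mc: "integrable M Sp" "(\<integral>\<omega>. Sp \<omega> \<partial>M) = (SUP n. \<integral>\<omega>. Mx n \<omega> \<partial>M)"
    using integrable_monotone_convergence[OF Mx_int ae_mono ae_lim ilim Sp_meas]
      integral_monotone_convergence[OF Mx_int ae_mono ae_lim ilim Sp_meas] by auto
  have "(SUP n. \<integral>\<omega>. Mx n \<omega> \<partial>M) \<le> 86/10 * sqrt \<beta> * \<sigma>"
    by (rule cSUP_least) (use bound2 in auto)
  moreover have "86/10 * sqrt \<beta> * \<sigma> \<le> 8.68 * sqrt \<beta> * \<sigma>" using s b by simp
  ultimately have "(\<integral>\<omega>. Sp \<omega> \<partial>M) \<le> 8.68 * sqrt \<beta> * \<sigma>" using mc(2) by linarith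
  with part1 mc(1) show ?thesis unfolding Sp_def[abs_def] by blast
qed
end
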